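(* In the curved-exam game described in the context, there exists a no-curve pure Nash equilibrium in which every student $i$ plays $y_i^*=\alpha_i$ if and only if $$\bar\alpha:=\frac1n\sum_{i=1}^n\alpha_i\ \ge\ \frac1n\max_{1\le i\le n}\big[(n-1)J_i(\alpha_i,n,m)+\alpha_i\big].$$ Moreover, if $m\in(0,1)$ is fixed and $(\alpha_i)_{i\ge1}$ is any sequence in $(0,1)$, then $\frac1n\max_{1\le i\le n}\big[(n-1)J_i(\alpha_i,n,m)+\alpha_i\big]\to m$ as $n\to\infty$.
   Context: The curved-exam game: fix $n\ge2$, abilities $\alpha_1,\dots,\alpha_n\in(0,1)$, target mean $m\in(0,1)$. Student $i$ chooses $x_i\in[0,1]$; $\bar x=\frac1n\sum_j x_j$, $\bar x_{-i}=\frac1{n-1}\sum_{j\ne i}x_j$. Grade $G_i(x)=x_i+\max(m-\bar x,0)$ (not truncated at 1); payoff $U_i(x)=G_i(x)^{\alpha_i}(1-x_i)^{1-\alpha_i}$. A no-curve equilibrium is a pure Nash equilibrium with $\bar x\ge m$. For each $i$, $J_i=J_i(\alpha_i,n,m)$ denotes the unique zero in $\big[\frac{nm-\alpha_i}{n-1},\frac{nm}{n-1}-\frac{\alpha_i}{n-\alpha_i}\big]$ of the strictly decreasing function $\phi_i(z)=\big(m+\frac{n-1}{n}(1-z)\big)^{\alpha_i}\big(1+\frac{nm}{n-1}-z\big)^{1-\alpha_i}-1$. *)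

theory Defs
  imports Complex_Main
begin

text \<open>Students are indexed by 0, ..., n-1; a strategy profile is a function nat => real
  whose values at indices >= n are irrelevant.\<close>

definition avg :: "nat \<Rightarrow> (nat \<Rightarrow> real) \<Rightarrow> real" where
  "avg n x = (\<Sum>j<n. x j) / real n"

definition grade :: "nat \<Rightarrow> real \<Rightarrow> (nat \<Rightarrow> real) \<Rightarrow> nat \<Rightarrow> real" where
  "grade n m x i = x i + max (m - avg n x) 0"

definition payoff :: "nat \<Rightarrow> real \<Rightarrow> (nat \<Rightarrow> real) \<Rightarrow> (nat \<Rightarrow> real) \<Rightarrow> nat \<Rightarrow> real" where
  "payoff n m \<alpha> x i = (grade n m x i) powr (\<alpha> i) * (1 - x i) powr (1 - \<alpha> i)"

definition is_profile :: "nat \<Rightarrow> (nat \<Rightarrow> real) \<Rightarrow> bool" where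
  "is_profile n x \<longleftrightarrow> (\<forall>i<n. 0 \<le> x i \<and> x i \<le> 1)"

definition pure_NE :: "nat \<Rightarrow> real \<Rightarrow> (nat \<Rightarrow> real) \<Rightarrow> (nat \<Rightarrow> real) \<Rightarrow> bool" where
  "pure_NE n m \<alpha> x \<longleftrightarrow> is_profile n x \<and>
     (\<forall>i<n. \<forall>y. 0 \<le> y \<and> y \<le> 1 \<longrightarrow> payoff n m \<alpha> (x(i := y)) i \<le> payoff n m \<alpha> x i)"

definition no_curve_NE :: "nat \<Rightarrow> real \<Rightarrow> (nat \<Rightarrow> real) \<Rightarrow> (nat \<Rightarrow> real) \<Rightarrow> bool" where
  "no_curve_NE n m \<alpha> x \<longleftrightarrow> pure_NE n m \<alpha> x \<and> avg n x \<ge> m"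

definition phi :: "real \<Rightarrow> nat \<Rightarrow> real \<Rightarrow> real \<Rightarrow> real" where
  "phi a n m z = (m + (real n - 1) / real n * (1 - z)) powr a
                 * (1 + real n * m / (real n - 1) - z) powr (1 - a) - 1"

definition J :: "real \<Rightarrow> nat \<Rightarrow> real \<Rightarrow> real" where
  "J a n m = (THE z. (real n * m - a) / (real n - 1) \<le> z
                   \<and> z \<le> real n * m / (real n - 1) - a / (real n - a)
                   \<and> phi a n m z = 0)"

definition threshold :: "nat \<Rightarrow> real \<Rightarrow> (nat \<Rightarrow> real) \<Rightarrow> real" where
  "threshold n m \<alpha> = Max ((\<lambda>i. (real n - 1) * J (\<alpha> i) n m + \<alpha> i) ` {..<n}) / real n"

end

theory Submission imports Defs "HOL-Analysis.Convex" begin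

definition gg :: "real \<Rightarrow> real" where "gg a = a powr a * (1-a) powr (1-a)"

lemma amgm0:
  fixes w a b :: real
  assumes "0 < w" "w < 1" "0 \<le> a" "0 \<le> b"
  shows "a powr w * b powr (1-w) \<le> w*a + (1-w)*b"
proof (cases "a = 0 \<or> b = 0")
  case True then show ?thesis using assms by auto
next
  case False then show ?thesis using assms Youngs_inequality_0[of w "1-w" a b] by auto
qed

lemma gg_pos: "0 < a \<Longrightarrow> a < 1 \<Longrightarrow> 0 < gg a"
  by (simp add: gg_def)

lemma amgm:
  fixes a u v :: real
  assumes "0 < a" "a < 1" "0 \<le> u" "0 \<le> v"
  shows "u powr a * v powr (1-a) \<le> gg a * (u+v)"
proof -
  have u: "u powr a = a powr a * (u/a) powr a"
    using assms by (simp add: powr_mult[symmetric])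
  have v: "v powr (1-a) = (1-a) powr (1-a) * (v/(1-a)) powr (1-a)"
    using assms by (simp add: powr_mult[symmetric])
  have "(u/a) powr a * (v/(1-a)) powr (1-a) \<le> a*(u/a) + (1-a)*(v/(1-a))"
    using assms by (intro amgm0) auto
  also have "\<dots> = u + v" using assms by simp
  finally have h: "(u/a) powr a * (v/(1-a)) powr (1-a) \<le> u + v" .
  have "u powr a * v powr (1-a) = gg a * ((u/a) powr a * (v/(1-a)) powr (1-a))"
    unfolding u v gg_def by (simp add: algebra_simps)
  also have "\<dots> \<le> gg a * (u+v)"
    using h gg_pos[OF assms(1,2)] by (intro mult_left_mono) auto
  finally show ?thesis .
qed

lemma amgm_eq:
  fixes a s :: real
  assumes "0 < a" "a < 1" "0 \<le> s"
  shows "(a*s) powr a * ((1-a)*s) powr (1-a) = gg a * s"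
proof -
  have e1: "(a*s) powr a = a powr a * s powr a" using assms by (simp add: powr_mult)
  have e2: "((1-a)*s) powr (1-a) = (1-a) powr (1-a) * s powr (1-a)" using assms by (simp add: powr_mult)
  have "(a*s) powr a * ((1-a)*s) powr (1-a) = gg a * (s powr a * s powr (1-a))"
    unfolding e1 e2 gg_def by (simp add: algebra_simps)
  also have "s powr a * s powr (1-a) = s"
    using assms by (simp add: powr_add[symmetric])
  finally show ?thesis .
qed

lemma phi_eq:
  assumes "n \<ge> 2" "0 < 1 + real n * m / (real n - 1) - z"
  shows "phi a n m z = ((real n - 1)/real n) powr a * (1 + real n * m / (real n - 1) - z) - 1"
proof -
  define B where "B = 1 + real n * m / (real n - 1) - z"
  have n1: "real n - 1 > 0" using assms by simp
  have b1: "m + (real n - 1) / real n * (1 - z) = (real n - 1)/real n * B"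
    unfolding B_def using n1 by (simp add: field_simps)
  have "B powr a * B powr (1-a) = B" using assms by (simp add: powr_add[symmetric] B_def)
  moreover have "((real n - 1)/real n * B) powr a = ((real n - 1)/real n) powr a * B powr a"
    using n1 assms powr_mult[of "(real n - 1)/real n" B a] by (simp add: B_def)
  ultimately show ?thesis unfolding phi_def b1 B_def[symmetric]
    by (simp add: mult.assoc)
qed

lemma J_props:
  assumes "n \<ge> 2" "0 < a" "a < 1" "0 < m"
  defines "K \<equiv> ((real n - 1)/real n) powr a"
  shows "J a n m = 1 + real n * m / (real n - 1) - 1/K"
    and "(real n * m - a) / (real n - 1) \<le> J a n m"
    and "J a n m \<le> real n * m / (real n - 1) - a / (real n - a)"
    and "K > 0"
proof -
  have n1: "real n - 1 > 0" "real n \<ge> 2" using assms by auto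
  show Kp: "K > 0" unfolding K_def using n1 by simp
  have K1: "K \<le> 1 - a/real n"
  proof -
    have "(1 - 1/real n) powr a * 1 powr (1-a) \<le> a*(1 - 1/real n) + (1-a)*1"
      using assms n1 by (intro amgm0) auto
    moreover have "(1 - 1/real n) = (real n - 1)/real n" using n1 by (simp add: field_simps)
    moreover have "(a * real n - a) / real n = a - a/real n" using n1 by (simp add: field_simps)
    ultimately show ?thesis unfolding K_def by (simp add: algebra_simps)
  qed
  have K2: "(real n/(real n - 1)) powr a \<le> 1 + a/(real n - 1)"
  proof -
    have "(1 + 1/(real n - 1)) powr a * 1 powr (1-a) \<le> a*(1 + 1/(real n - 1)) + (1-a)*1"
      using assms n1 by (intro amgm0) auto
    moreover have "(1 + 1/(real n - 1)) = real n/(real n - 1)" using n1 by (simp add: field_simps)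
    moreover have "a * real n / (real n - 1) = a + a/(real n - 1)" using n1 by (simp add: field_simps)
    ultimately show ?thesis by (simp add: algebra_simps)
  qed
  have KK: "(real n/(real n - 1)) powr a * K = 1"
    unfolding K_def using n1 by (simp add: powr_mult[symmetric])
  hence iK: "1/K = (real n/(real n - 1)) powr a" using Kp by (simp add: field_simps)
  define z0 where "z0 = 1 + real n * m / (real n - 1) - 1/K"
  have lo: "(real n * m - a) / (real n - 1) \<le> z0"
  proof -
    have "(real n * m - a) / (real n - 1) = real n * m / (real n - 1) - a/(real n - 1)"
      by (simp add: diff_divide_distrib)
    then show ?thesis unfolding z0_def using K2 iK by linarith
  qed
  have hi: "z0 \<le> real n * m / (real n - 1) - a / (real n - a)"
  proof -
    have "real n - a > 0" using n1 assms by simp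
    have "K * (real n / (real n - a)) \<le> 1"
      using K1 \<open>real n - a > 0\<close> n1 by (simp add: field_simps)
    hence "real n / (real n - a) \<le> 1/K" using Kp by (simp add: field_simps)
    moreover have "real n / (real n - a) = 1 + a/(real n - a)"
      using \<open>real n - a > 0\<close> by (simp add: field_simps)
    ultimately show ?thesis unfolding z0_def by linarith
  qed
  have pos: "0 < 1 + real n * m / (real n - 1) - z"
    if "z \<le> real n * m / (real n - 1) - a / (real n - a)" for z
  proof -
    have "a / (real n - a) \<ge> 0" using assms n1 by simp
    thus ?thesis using that by linarith
  qed
  have ph0: "phi a n m z0 = 0"
  proof -
    have e: "phi a n m z0 = K * (1 + real n * m / (real n - 1) - z0) - 1"
      using phi_eq[where a=a and z=z0, OF assms(1) pos[OF hi]] by (simp only: K_def)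
    have "1 + real n * m / (real n - 1) - z0 = 1/K" by (simp add: z0_def)
    with e Kp show ?thesis by simp
  qed
  have uniq: "z = z0" if "(real n * m - a) / (real n - 1) \<le> z
                   \<and> z \<le> real n * m / (real n - 1) - a / (real n - a)
                   \<and> phi a n m z = 0" for z
  proof -
    have e: "phi a n m z = K * (1 + real n * m / (real n - 1) - z) - 1"
      using phi_eq[where a=a and z=z, OF assms(1) pos[of z]] that by (simp only: K_def)
    hence "K * (1 + real n * m / (real n - 1) - z) = 1" using that by simp
    hence "1 + real n * m / (real n - 1) - z = 1/K" using Kp by (simp add: field_simps)
    thus ?thesis unfolding z0_def by simp
  qed
  have "J a n m = z0" unfolding J_def
    apply (rule the_equality)
     apply (intro conjI lo hi ph0)
    apply (erule uniq)
    done
  thus "J a n m = 1 + real n * m / (real n - 1) - 1/K" by (simp add: z0_def)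
  show "(real n * m - a) / (real n - 1) \<le> J a n m" using lo \<open>J a n m = z0\<close> by simp
  show "J a n m \<le> real n * m / (real n - 1) - a / (real n - a)" using hi \<open>J a n m = z0\<close> by simp
qed

lemma suff:
  assumes n2: "n \<ge> 2" and a: "0 < a" "a < 1" and m: "0 < m"
    and T: "(real n - 1) * J a n m \<le> T" and y: "0 \<le> y" "y \<le> 1"
  shows "(y + max (m - (T+y)/real n) 0) powr a * (1-y) powr (1-a) \<le> gg a"
proof -
  define K where "K = ((real n - 1)/real n) powr a"
  have n1: "real n - 1 > 0" "real n \<ge> 2" using n2 by auto
  have Jf: "J a n m = 1 + real n * m / (real n - 1) - 1/K" and Kp: "K > 0"
    using J_props[OF n2 a m] unfolding K_def by auto
  define c where "c = (T - real n * m)/(real n - 1)"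
  have c1: "1 - c = 1 + real n * m / (real n - 1) - T/(real n - 1)"
    unfolding c_def by (simp add: diff_divide_distrib)
  have "J a n m \<le> T/(real n - 1)" using T n1 by (simp add: field_simps mult.commute)
  hence "1 - c \<le> 1/K" using Jf c1 by linarith
  hence KT: "K * (1 - c) \<le> 1" using Kp by (simp add: field_simps mult.commute)
  show ?thesis
  proof (cases "m \<le> (T+y)/real n")
    case True
    hence "max (m - (T+y)/real n) 0 = 0" by simp
    thus ?thesis using amgm[OF a y(1), of "1-y"] y by simp
  next
    case False
    define G where "G = y + m - (T+y)/real n"
    have mx: "max (m - (T+y)/real n) 0 = m - (T+y)/real n" using False by simp
    have Tc: "T = (real n - 1)*c + real n * m" using n1 by (simp add: c_def)
    have Gc: "G = (real n - 1)/real n * (y - c)"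
      unfolding G_def using n1 Tc by (simp add: field_simps)
    have "G > y" unfolding G_def using False by simp
    hence pr: "0 < (real n - 1)/real n * (y - c)" using Gc y by simp
    have p: "0 < (real n - 1)/real n" using n1 by simp
    have yc: "y - c > 0" using zero_less_mult_pos[OF pr p] .
    have GK: "G powr a = K * (y - c) powr a"
      unfolding Gc K_def using n1 yc powr_mult[of "(real n - 1)/real n" "y-c" a] by simp
    have am: "(y-c) powr a * (1-y) powr (1-a) \<le> gg a * ((y-c) + (1-y))"
      using amgm[OF a, of "y-c" "1-y"] yc y by simp
    have "(y + max (m - (T+y)/real n) 0) powr a * (1-y) powr (1-a) = K * ((y-c) powr a * (1-y) powr (1-a))"
      using mx GK unfolding G_def by (simp add: algebra_simps)
    also have "\<dots> \<le> K * (gg a * (1 - c))"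
      using am Kp by (intro mult_left_mono) auto
    also have "\<dots> = gg a * (K * (1 - c))" by simp
    also have "\<dots> \<le> gg a" using KT gg_pos[OF a] by (simp add: mult_left_le)
    finally show ?thesis .
  qed
qed

lemma nec:
  assumes n2: "n \<ge> 2" and a: "0 < a" "a < 1" and m: "0 < m"
    and T1: "real n * m \<le> T + a" and T2: "T \<le> real n - 1" and T3: "T < (real n - 1) * J a n m"
  shows "\<exists>y. 0 \<le> y \<and> y \<le> 1 \<and> gg a < (y + max (m - (T+y)/real n) 0) powr a * (1-y) powr (1-a)"
proof -
  define K where "K = ((real n - 1)/real n) powr a"
  have n1: "real n - 1 > 0" "real n \<ge> 2" using n2 by auto
  have Jf: "J a n m = 1 + real n * m / (real n - 1) - 1/K" and Kp: "K > 0"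
    and Jhi: "J a n m \<le> real n * m / (real n - 1) - a / (real n - a)"
    using J_props[OF n2 a m] unfolding K_def by auto
  define c where "c = (T - real n * m)/(real n - 1)"
  have c1: "1 - c = 1 + real n * m / (real n - 1) - T/(real n - 1)"
    unfolding c_def by (simp add: diff_divide_distrib)
  have TJ: "T/(real n - 1) < J a n m" using T3 n1 by (simp add: field_simps mult.commute)
  hence "1 - c > 1/K" using Jf c1 by linarith
  hence KT: "K * (1 - c) > 1" using Kp by (simp add: field_simps mult.commute)
  have Tc: "T = (real n - 1)*c + real n * m" using n1 by (simp add: c_def)
  have "real n * m > 0" using m n1 by simp
  hence "(real n - 1)*c < (real n - 1) * 1" using Tc T2 by simp
  hence c_lt: "c < 1" using n1 by simp
  have "(real n - 1)*c \<ge> -a" using Tc T1 by linarith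
  hence c_ge: "c \<ge> - a/(real n - 1)" using n1 by (simp add: field_simps)
  have "T/(real n - 1) < real n * m / (real n - 1) - a / (real n - a)" using TJ Jhi by linarith
  hence c_hi: "c < - a/(real n - a)" unfolding c_def by (simp add: diff_divide_distrib)
  have na: "real n - a > 0" using n1 a by simp
  define y where "y = a + (1-a)*c"
  have "(1-a)*(1-c) \<ge> 0" using a c_lt by simp
  hence y1: "y \<le> 1" unfolding y_def by (simp add: algebra_simps)
  have y0: "0 \<le> y"
  proof -
    have "(1-a)*c \<ge> (1-a)*(- a/(real n - 1))" using c_ge a by (intro mult_left_mono) auto
    moreover have "(1-a)*(- a/(real n - 1)) \<ge> -a"
    proof -
      have "(1-a)*a \<le> a * (real n - 1)" using a n1 mult_right_mono[of "1-a" "real n - 1" a] by (simp add: mult.commute)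
      hence "(1-a)*a/(real n - 1) \<le> a" using n1 by (simp add: field_simps)
      thus ?thesis by simp
    qed
    ultimately show ?thesis unfolding y_def by linarith
  qed
  have "(real n - a) * c < - a" using c_hi na by (simp add: field_simps)
  moreover have "T + y = real n * m + ((real n - a)*c + a)" using Tc by (simp add: y_def algebra_simps)
  ultimately have "T + y < real n * m" by simp
  hence less: "(T+y)/real n < m" using n1 by (simp add: field_simps)
  have mx: "max (m - (T+y)/real n) 0 = m - (T+y)/real n" using less by simp
  have Gc: "y + m - (T+y)/real n = (real n - 1)/real n * (a * (1 - c))"
    unfolding y_def using n1 Tc by (simp add: field_simps)
  have oy: "1 - y = (1-a) * (1-c)" unfolding y_def by (simp add: algebra_simps)
  have GK: "((real n - 1)/real n * (a * (1 - c))) powr a = K * (a * (1 - c)) powr a"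
    unfolding K_def using n1 a c_lt powr_mult[of "(real n - 1)/real n" "a * (1 - c)" a] by simp
  have "(y + max (m - (T+y)/real n) 0) powr a * (1-y) powr (1-a)
      = K * ((a * (1 - c)) powr a * ((1-a) * (1-c)) powr (1-a))"
    using mx GK Gc oy by (simp add: algebra_simps)
  also have "\<dots> = K * (gg a * (1 - c))" using amgm_eq[OF a, of "1-c"] c_lt by simp
  also have "\<dots> = gg a * (K * (1 - c))" by simp
  finally have "(y + max (m - (T+y)/real n) 0) powr a * (1-y) powr (1-a) = gg a * (K * (1 - c))" .
  moreover have "gg a < gg a * (K * (1 - c))" using KT gg_pos[OF a] by simp
  ultimately show ?thesis using y0 y1 by auto
qed

lemma E_bounds:
  assumes "n \<ge> 2" "0 < a" "a < 1" "0 < m"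
  shows "real n * m \<le> (real n - 1) * J a n m + a" "(real n - 1) * J a n m + a \<le> real n * m + 1"
proof -
  have n1: "real n - 1 > 0" "real n - a > 0" using assms by auto
  have lo: "(real n * m - a) / (real n - 1) \<le> J a n m"
    and hi: "J a n m \<le> real n * m / (real n - 1) - a / (real n - a)"
    using J_props[OF assms] by auto
  have "(real n - 1) * ((real n * m - a) / (real n - 1)) \<le> (real n - 1) * J a n m"
    using lo n1 by (intro mult_left_mono) auto
  thus "real n * m \<le> (real n - 1) * J a n m + a" using n1 by simp
  have "(real n - 1) * J a n m \<le> (real n - 1) * (real n * m / (real n - 1) - a / (real n - a))"
    using hi n1 by (intro mult_left_mono) auto
  also have "\<dots> = real n * m - (real n - 1) * (a / (real n - a))"
    using n1 by (simp add: right_diff_distrib)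
  also have "\<dots> \<le> real n * m" using n1 assms by simp
  finally show "(real n - 1) * J a n m + a \<le> real n * m + 1" using assms by simp
qed

lemma sum_upd:
  fixes x :: "nat \<Rightarrow> real"
  assumes "i < n"
  shows "(\<Sum>j<n. (x(i:=y)) j) = (\<Sum>j<n. x j) - x i + y"
proof -
  have f: "finite {..<n}" "i \<in> {..<n}" using assms by auto
  have "(\<Sum>j<n. (x(i:=y)) j) = y + (\<Sum>j\<in>{..<n}-{i}. (x(i:=y)) j)"
    using sum.remove[OF f, of "x(i:=y)"] by simp
  also have "(\<Sum>j\<in>{..<n}-{i}. (x(i:=y)) j) = (\<Sum>j\<in>{..<n}-{i}. x j)"
    by (rule sum.cong) auto
  also have "(\<Sum>j\<in>{..<n}-{i}. x j) = (\<Sum>j<n. x j) - x i"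
    using sum.remove[OF f, of x] by simp
  finally show ?thesis by simp
qed

lemma payoff_upd:
  assumes "i < n" "\<forall>j<n. x j = \<alpha> j"
  shows "payoff n m \<alpha> (x(i:=y)) i
    = (y + max (m - (((\<Sum>j<n. \<alpha> j) - \<alpha> i) + y)/real n) 0) powr (\<alpha> i) * (1-y) powr (1 - \<alpha> i)"
proof -
  have "(\<Sum>j<n. x j) = (\<Sum>j<n. \<alpha> j)" using assms by (intro sum.cong) auto
  moreover have "x i = \<alpha> i" using assms by auto
  ultimately show ?thesis
    unfolding payoff_def grade_def avg_def using sum_upd[OF assms(1), of x y] by simp
qed

lemma payoff_self:
  assumes "i < n" "\<forall>j<n. x j = \<alpha> j"
  shows "payoff n m \<alpha> x i
    = (\<alpha> i + max (m - (((\<Sum>j<n. \<alpha> j) - \<alpha> i) + \<alpha> i)/real n) 0) powr (\<alpha> i) * (1-\<alpha> i) powr (1 - \<alpha> i)"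
proof -
  have "x(i := \<alpha> i) = x" using assms by auto
  thus ?thesis using payoff_upd[OF assms, of m "\<alpha> i"] by simp
qed

lemma self_val:
  assumes "real n * m \<le> T + a" "real n > 0"
  shows "(a + max (m - (T + a)/real n) 0) powr a * (1-a) powr (1 - a) = gg a"
proof -
  have "m \<le> (T+a)/real n" using assms by (simp add: field_simps)
  thus ?thesis by (simp add: gg_def)
qed

theorem mainTheorem11:
  fixes n :: nat and m :: real and \<alpha> :: "nat \<Rightarrow> real"
  assumes "n \<ge> 2" and "0 < m" and "m < 1"
    and "\<forall>i<n. 0 < \<alpha> i \<and> \<alpha> i < 1"
  shows "((\<exists>x. no_curve_NE n m \<alpha> x \<and> (\<forall>i<n. x i = \<alpha> i))
            \<longleftrightarrow> avg n \<alpha> \<ge> threshold n m \<alpha>)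
         \<and> (\<forall>\<beta> :: nat \<Rightarrow> real. (\<forall>i. 0 < \<beta> i \<and> \<beta> i < 1) \<longrightarrow>
              (\<lambda>N. threshold N m \<beta>) \<longlonglongrightarrow> m)"
proof
  define S where "S = (\<Sum>j<n. \<alpha> j)"
  define E where "E = (\<lambda>i. (real n - 1) * J (\<alpha> i) n m + \<alpha> i)"
  have n0: "real n > 0" using assms by simp
  have fin: "finite (E ` {..<n})" "E ` {..<n} \<noteq> {}" using assms by (auto simp: lessThan_empty_iff)
  have thr: "threshold n m \<alpha> \<le> avg n \<alpha> \<longleftrightarrow> (\<forall>i<n. E i \<le> S)"
  proof -
    have "threshold n m \<alpha> \<le> avg n \<alpha> \<longleftrightarrow> Max (E ` {..<n}) \<le> S"
      unfolding threshold_def avg_def E_def[symmetric] S_def[symmetric]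
      using n0 by (simp add: divide_right_mono divide_le_cancel)
    also have "\<dots> \<longleftrightarrow> (\<forall>i<n. E i \<le> S)" using fin by (simp add: Max_le_iff) blast
    finally show ?thesis .
  qed
  have Tle: "S - \<alpha> i \<le> real n - 1" if "i < n" for i
  proof -
    have f: "finite {..<n}" "i \<in> {..<n}" using that by auto
    have "S - \<alpha> i = (\<Sum>j\<in>{..<n}-{i}. \<alpha> j)" unfolding S_def using sum.remove[OF f, of \<alpha>] by simp
    also have "\<dots> \<le> real (card ({..<n}-{i})) * 1"
      by (rule sum_bounded_above) (use assms in auto)
    also have "\<dots> = real n - 1" using that by (simp add: of_nat_diff)
    finally show ?thesis .
  qed
  show "(\<exists>x. no_curve_NE n m \<alpha> x \<and> (\<forall>i<n. x i = \<alpha> i)) \<longleftrightarrow> avg n \<alpha> \<ge> threshold n m \<alpha>"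
  proof
    assume "\<exists>x. no_curve_NE n m \<alpha> x \<and> (\<forall>i<n. x i = \<alpha> i)"
    then obtain x where NE: "pure_NE n m \<alpha> x" and av: "avg n x \<ge> m" and xa: "\<forall>i<n. x i = \<alpha> i"
      unfolding no_curve_NE_def by auto
    have "avg n x = S / real n" unfolding avg_def S_def using xa by simp
    hence "S = real n * avg n x" using n0 by simp
    moreover have "real n * m \<le> real n * avg n x" using av n0 by (intro mult_left_mono) auto
    ultimately have Sm: "real n * m \<le> S" by simp
    have "\<forall>i<n. E i \<le> S"
    proof (intro allI impI, rule ccontr)
      fix i assume i: "i < n" and "\<not> E i \<le> S"
      hence T3: "S - \<alpha> i < (real n - 1) * J (\<alpha> i) n m" unfolding E_def by simp
      have a: "0 < \<alpha> i" "\<alpha> i < 1" using assms i by auto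
      obtain y where y: "0 \<le> y" "y \<le> 1"
        and gt: "gg (\<alpha> i) < (y + max (m - ((S - \<alpha> i)+y)/real n) 0) powr (\<alpha> i) * (1-y) powr (1-\<alpha> i)"
        using nec[OF assms(1) a assms(2) _ Tle[OF i] T3] Sm by auto
      have "payoff n m \<alpha> (x(i:=y)) i \<le> payoff n m \<alpha> x i" using NE i y unfolding pure_NE_def by auto
      moreover have "payoff n m \<alpha> x i = gg (\<alpha> i)"
        using payoff_self[OF i xa, of m] self_val[of n m "S - \<alpha> i" "\<alpha> i"] Sm n0 unfolding S_def by simp
      moreover have "payoff n m \<alpha> (x(i:=y)) i = (y + max (m - ((S - \<alpha> i)+y)/real n) 0) powr (\<alpha> i) * (1-y) powr (1-\<alpha> i)"
        using payoff_upd[OF i xa, of m y] unfolding S_def by simp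
      ultimately show False using gt by simp
    qed
    thus "avg n \<alpha> \<ge> threshold n m \<alpha>" using thr by simp
  next
    assume "avg n \<alpha> \<ge> threshold n m \<alpha>"
    hence ES: "\<forall>i<n. E i \<le> S" using thr by simp
    have a0: "0 < \<alpha> 0" "\<alpha> 0 < 1" using assms by auto
    have "real n * m \<le> E 0" unfolding E_def using E_bounds[OF assms(1) a0 assms(2)] by simp
    hence Sm: "real n * m \<le> S" using ES assms by fastforce
    have xa: "\<forall>i<n. \<alpha> i = \<alpha> i" by simp
    have "no_curve_NE n m \<alpha> \<alpha>"
      unfolding no_curve_NE_def pure_NE_def is_profile_def
    proof (intro conjI allI impI)
      fix i assume "i < n" thus "0 \<le> \<alpha> i" "\<alpha> i \<le> 1" using assms by auto
    next
      show "m \<le> avg n \<alpha>" unfolding avg_def S_def[symmetric] using Sm n0 by (simp add: field_simps)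
    next
      fix i and y :: real assume i: "i < n" and y: "0 \<le> y \<and> y \<le> 1"
      have a: "0 < \<alpha> i" "\<alpha> i < 1" using assms i by auto
      have T: "(real n - 1) * J (\<alpha> i) n m \<le> S - \<alpha> i" using ES i unfolding E_def by auto
      have "payoff n m \<alpha> (\<alpha>(i:=y)) i = (y + max (m - ((S - \<alpha> i)+y)/real n) 0) powr (\<alpha> i) * (1-y) powr (1-\<alpha> i)"
        using payoff_upd[OF i xa, of m y] unfolding S_def by simp
      also have "\<dots> \<le> gg (\<alpha> i)" using suff[OF assms(1) a assms(2) T] y by auto
      also have "gg (\<alpha> i) = payoff n m \<alpha> \<alpha> i"
        using payoff_self[OF i xa, of m] self_val[of n m "S - \<alpha> i" "\<alpha> i"] Sm n0 unfolding S_def by simp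
      finally show "payoff n m \<alpha> (\<alpha>(i:=y)) i \<le> payoff n m \<alpha> \<alpha> i" .
    qed
    thus "\<exists>x. no_curve_NE n m \<alpha> x \<and> (\<forall>i<n. x i = \<alpha> i)" by blast
  qed
next
  show "\<forall>\<beta> :: nat \<Rightarrow> real. (\<forall>i. 0 < \<beta> i \<and> \<beta> i < 1) \<longrightarrow> (\<lambda>N. threshold N m \<beta>) \<longlonglongrightarrow> m"
  proof (intro allI impI)
    fix \<beta> :: "nat \<Rightarrow> real" assume b: "\<forall>i. 0 < \<beta> i \<and> \<beta> i < 1"
    have bnd: "m \<le> threshold N m \<beta> \<and> threshold N m \<beta> \<le> m + 1 / real N" if N: "N \<ge> 2" for N
    proof -
      define E where "E = (\<lambda>i. (real N - 1) * J (\<beta> i) N m + \<beta> i)"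
      have fin: "finite (E ` {..<N})" "E ` {..<N} \<noteq> {}" using N by (auto simp: lessThan_empty_iff)
      have Eb: "real N * m \<le> E i \<and> E i \<le> real N * m + 1" for i
        unfolding E_def using E_bounds[OF N, of "\<beta> i" m] b assms(2) by auto
      have "E 0 \<le> Max (E ` {..<N})" using fin N by (intro Max_ge) auto
      hence lo: "real N * m \<le> Max (E ` {..<N})" using Eb[of 0] by linarith
      have hi: "Max (E ` {..<N}) \<le> real N * m + 1" using fin Eb by (simp add: Max_le_iff)
      have Np: "real N > 0" using N by simp
      have "m \<le> Max (E ` {..<N}) / real N" using lo Np by (simp add: field_simps)
      moreover have "Max (E ` {..<N}) / real N \<le> m + 1 / real N" using hi Np by (simp add: field_simps)
      ultimately show ?thesis unfolding threshold_def E_def by simp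
    qed
    have ev: "eventually (\<lambda>N. (2::nat) \<le> N) sequentially" by (rule eventually_ge_at_top)
    have lim: "(\<lambda>N. m + 1 / real N) \<longlonglongrightarrow> m + 0"
      by (intro tendsto_add tendsto_const lim_1_over_n)
    show "(\<lambda>N. threshold N m \<beta>) \<longlonglongrightarrow> m"
    proof (rule tendsto_sandwich[of "\<lambda>_. m" _ _ "\<lambda>N. m + 1 / real N"])
      show "\<forall>\<^sub>F N in sequentially. m \<le> threshold N m \<beta>" using ev by eventually_elim (use bnd in auto)
      show "\<forall>\<^sub>F N in sequentially. threshold N m \<beta> \<le> m + 1 / real N" using ev by eventually_elim (use bnd in auto)
      show "(\<lambda>_. m) \<longlonglongrightarrow> m" by simp
      show "(\<lambda>N. m + 1 / real N) \<longlonglongrightarrow> m" using lim by simp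
    qed
  qed
qed

end
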